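(* Let $(P_1,\dots,P_J)$ be a stochastically rationalizable stochastic demand system assigning probability zero to patches that lie on more than one budget plane, with vector representation $\pi=(\pi_{-J}',\pi_J')'$. For $k\in\{1,\dots,G\}$ and $z\ge0$ let $F_k(z)=P_J(\{y:y_k\le z\})$. Then $F_k(z)$ is bounded from below by $$\min_{\nu\in\mathbf R^H_+}\Big\{\sum_{i\in\{1,\dots,I_J\}:\ \overline d_k(i|J)\le z}e_i'A_J\nu\Big\}\quad\text{s.t. } A_{-J}\nu=\pi_{-J},$$ and from above by $$\max_{\nu\in\mathbf R^H_+}\Big\{\sum_{i\in\{1,\dots,I_J\}:\ \underline d_k(i|J)\le z}e_i'A_J\nu\Big\}\quad\text{s.t. } A_{-J}\nu=\pi_{-J},$$ where $e_i$ is the $i$-th unit vector of $\mathbf R^{I_J}$.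
   Context: Budget planes $\mathcal B_j=\{y\in\mathbf R^G_+:p_j'y=1\}$, $p_j\in\mathbf R^G_{++}$. Patches are cells of the coarsest partition of $\bigcup_j\mathcal B_j$ such that each cell is, for every $j$, entirely on, strictly above or strictly below $\mathcal B_j$; patches on more than one budget plane are dropped, $x_{1|j},\dots,x_{I_j|j}$ are the remaining patches in $\mathcal B_j$, $I=\sum_jI_j$, with fixed representatives $y^*_{i|j}\in x_{i|j}$. A demand vector $(d_1,\dots,d_J)\in\prod_j\mathcal B_j$ is rationalizable if some strictly increasing $u:\mathbf R^G_+\to\mathbf R$ has $d_j\in\arg\max_{\mathcal B_j}u$ for all $j$. A stochastic demand system $(P_1,\dots,P_J)$ ($P_j$ a probability on $\mathcal B_j$) is stochastically rationalizable if some probability on $\prod_j\mathcal B_j$ concentrated on rationalizable demand vectors has marginals $P_1,\dots,P_J$. Its vector representation $\pi\in\mathbf R^I$ has $j$-th block $(P_j(x_{1|j}),\dots,P_j(x_{I_j|j}))$. $A\in\{0,1\}^{I\times H}$ has as columns (each once) exactly the binary $I$-vectors with one $1$ per block, at position $i_j$ in block $j$, such that $(y^*_{i_1|1},\dots,y^*_{i_J|J})$ is rationalizable. $A_J,\pi_J$ denote rows/entries of block $J$ and $A_{-J},\pi_{-J}$ the rest. $\underline d_k(i|J)=\inf\{y_k:y\in x_{i|J}\}$, $\overline d_k(i|J)=\sup\{y_k:y\in x_{i|J}\}$. *)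

theory Defs
  imports "HOL-Probability.Probability"
begin

text \<open>Goods are indexed by a finite type 'g (so G = CARD('g)); budgets are indexed
  0..J-1, the last budget (J in the paper) is J-1.\<close>

definition nonneg_orthant :: "(real^'g) set" where
  "nonneg_orthant = {y. \<forall>k. 0 \<le> y $ k}"

definition budget :: "(nat \<Rightarrow> real^'g) \<Rightarrow> nat \<Rightarrow> (real^'g) set" where
  "budget p j = {y \<in> nonneg_orthant. p j \<bullet> y = 1}"

definition budget_union :: "(nat \<Rightarrow> real^'g) \<Rightarrow> nat \<Rightarrow> (real^'g) set" where
  "budget_union p J = (\<Union>j<J. budget p j)"

definition position :: "(nat \<Rightarrow> real^'g) \<Rightarrow> nat \<Rightarrow> real^'g \<Rightarrow> nat \<Rightarrow> real" where
  "position p J y = (\<lambda>j. if j < J then sgn (p j \<bullet> y - 1) else 0)"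

text \<open>Cells of the coarsest partition of the union of budget planes such that each
  cell is, for every plane, entirely on, strictly above or strictly below it.\<close>
definition cells :: "(nat \<Rightarrow> real^'g) \<Rightarrow> nat \<Rightarrow> (real^'g) set set" where
  "cells p J = {{y \<in> budget_union p J. position p J y = position p J x} | x. x \<in> budget_union p J}"

definition on_several_planes :: "(nat \<Rightarrow> real^'g) \<Rightarrow> nat \<Rightarrow> (real^'g) set \<Rightarrow> bool" where
  "on_several_planes p J C \<longleftrightarrow>
     (\<exists>j l. j < J \<and> l < J \<and> j \<noteq> l \<and> C \<subseteq> budget p j \<and> C \<subseteq> budget p l)"

definition patches :: "(nat \<Rightarrow> real^'g) \<Rightarrow> nat \<Rightarrow> nat \<Rightarrow> (real^'g) set set" where
  "patches p J j = {C \<in> cells p J. C \<subseteq> budget p j \<and> \<not> on_several_planes p J C}"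

definition strictly_increasing :: "(real^'g \<Rightarrow> real) \<Rightarrow> bool" where
  "strictly_increasing u \<longleftrightarrow>
     (\<forall>x y. x \<in> nonneg_orthant \<and> y \<in> nonneg_orthant \<and> (\<forall>k. x $ k \<le> y $ k) \<and> x \<noteq> y
        \<longrightarrow> u x < u y)"

definition rationalizable :: "(nat \<Rightarrow> real^'g) \<Rightarrow> nat \<Rightarrow> (nat \<Rightarrow> real^'g) \<Rightarrow> bool" where
  "rationalizable p J d \<longleftrightarrow>
     (\<forall>j<J. d j \<in> budget p j) \<and>
     (\<exists>u. strictly_increasing u \<and> (\<forall>j<J. \<forall>y \<in> budget p j. u y \<le> u (d j)))"

definition stoch_demand_system ::
  "(nat \<Rightarrow> real^'g) \<Rightarrow> nat \<Rightarrow> (nat \<Rightarrow> (real^'g) measure) \<Rightarrow> bool" where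
  "stoch_demand_system p J P \<longleftrightarrow>
     (\<forall>j<J. prob_space (P j) \<and> sets (P j) = sets (restrict_space borel (budget p j)))"

definition stoch_rationalizable ::
  "(nat \<Rightarrow> real^'g) \<Rightarrow> nat \<Rightarrow> (nat \<Rightarrow> (real^'g) measure) \<Rightarrow> bool" where
  "stoch_rationalizable p J P \<longleftrightarrow>
     stoch_demand_system p J P \<and>
     (\<exists>Q. prob_space Q \<and> sets Q = sets (PiM {..<J} P) \<and>
          (AE d in Q. rationalizable p J d) \<and>
          (\<forall>j<J. distr Q (P j) (\<lambda>d. d j) = P j))"

text \<open>Columns of A: one patch per budget (a choice function), identified with the
  binary vector having a 1 at that patch in each block, such that the tuple of
  representatives is rationalizable.\<close>
definition columns ::
  "(nat \<Rightarrow> real^'g) \<Rightarrow> nat \<Rightarrow> ((real^'g) set \<Rightarrow> real^'g) \<Rightarrow> (nat \<Rightarrow> (real^'g) set) set" where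
  "columns p J rep = {c. (\<forall>j<J. c j \<in> patches p J j) \<and> (\<forall>j. J \<le> j \<longrightarrow> c j = {}) \<and>
                         rationalizable p J (\<lambda>j. rep (c j))}"

text \<open>Entry of A nu at patch x of block j.\<close>
definition A_times ::
  "(nat \<Rightarrow> (real^'g) set) set \<Rightarrow> ((nat \<Rightarrow> (real^'g) set) \<Rightarrow> real) \<Rightarrow> nat \<Rightarrow> (real^'g) set \<Rightarrow> real" where
  "A_times H \<nu> j x = (\<Sum>c\<in>{c \<in> H. c j = x}. \<nu> c)"

text \<open>nu in R^H_+ with A_{-J} nu = pi_{-J}.\<close>
definition feasible ::
  "(nat \<Rightarrow> real^'g) \<Rightarrow> nat \<Rightarrow> (nat \<Rightarrow> (real^'g) measure) \<Rightarrow> ((real^'g) set \<Rightarrow> real^'g)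
    \<Rightarrow> ((nat \<Rightarrow> (real^'g) set) \<Rightarrow> real) set" where
  "feasible p J P rep =
     {\<nu>. (\<forall>c \<in> columns p J rep. 0 \<le> \<nu> c) \<and> (\<forall>c. c \<notin> columns p J rep \<longrightarrow> \<nu> c = 0) \<and>
          (\<forall>j < J - 1. \<forall>x \<in> patches p J j. A_times (columns p J rep) \<nu> j x = measure (P j) x)}"

end

theory Submission imports Defs begin

lemma inner_strict_mono:
  fixes a x y :: "real^'g"
  assumes "\<forall>g. 0 < a $ g" "\<forall>g. x $ g \<le> y $ g" "x \<noteq> y"
  shows "a \<bullet> x < a \<bullet> y"
proof -
  obtain g0 where g0: "x $ g0 \<noteq> y $ g0" using assms(3) by (meson vec_eq_iff)
  have "a \<bullet> y - a \<bullet> x = (\<Sum>g\<in>UNIV. a $ g * (y $ g - x $ g))"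
    by (simp add: inner_vec_def sum_subtractf algebra_simps)
  also have "\<dots> > 0"
  proof (rule sum_pos2[where i=g0])
    show "0 < a $ g0 * (y $ g0 - x $ g0)" using assms(1,2) g0
      by (metis diff_gt_0_iff_gt less_eq_real_def mult_pos_pos)
    show "\<And>i. i \<in> UNIV \<Longrightarrow> 0 \<le> a $ i * (y $ i - x $ i)" using assms(1,2)
      by (simp add: less_imp_le)
  qed auto
  finally show ?thesis by simp
qed

lemma sum_strict_mono_vec:
  fixes x y :: "real^'g"
  assumes "\<forall>g. x $ g \<le> y $ g" "x \<noteq> y"
  shows "(\<Sum>g\<in>UNIV. x $ g) < (\<Sum>g\<in>UNIV. y $ g)"
proof -
  obtain g0 where g0: "x $ g0 \<noteq> y $ g0" using assms(2) by (meson vec_eq_iff)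
  show ?thesis
    apply (rule sum_strict_mono_ex1) using assms g0 by (auto simp: order_less_le)
qed

lemma inner_nonneg_orth:
  fixes a x :: "real^'g"
  assumes "\<forall>g. 0 < a $ g" "x \<in> nonneg_orthant"
  shows "0 \<le> a \<bullet> x"
  using assms unfolding nonneg_orthant_def inner_vec_def
  by (auto intro!: sum_nonneg simp: less_imp_le)

lemma rat_strict:
  fixes p :: "nat \<Rightarrow> real^'g"
  assumes pos: "\<forall>j<J. \<forall>g. 0 < p j $ g" and u: "strictly_increasing u"
    and opt: "\<forall>j<J. \<forall>y \<in> budget p j. u y \<le> u (d j)"
    and db: "\<forall>j<J. d j \<in> budget p j"
    and ij: "i < J" "j < J" and lt: "p i \<bullet> d j < 1"
  shows "u (d j) < u (d i)"
proof -
  define g0 :: 'g where "g0 = undefined"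
  define t where "t = (1 - p i \<bullet> d j) / (p i $ g0)"
  have pg: "0 < p i $ g0" using pos ij by auto
  have t: "0 < t" using lt pg by (simp add: t_def)
  define y where "y = d j + axis g0 t"
  have dj: "d j \<in> nonneg_orthant" using db ij by (simp add: budget_def)
  have yo: "y \<in> nonneg_orthant" using dj t
    by (auto simp: y_def nonneg_orthant_def axis_def)
  have "p i \<bullet> y = p i \<bullet> d j + p i $ g0 * t"
    by (simp add: y_def inner_add_right inner_axis)
  also have "\<dots> = 1" using pg by (simp add: t_def)
  finally have "y \<in> budget p i" using yo by (simp add: budget_def)
  hence "u y \<le> u (d i)" using opt ij by auto
  moreover have "u (d j) < u y"
  proof -
    have "\<forall>k. d j $ k \<le> y $ k" using t by (auto simp: y_def axis_def)
    moreover have "d j \<noteq> y" using t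
      by (metis add_cancel_left_right axis_eq_0_iff less_irrefl y_def)
    ultimately show ?thesis using u dj yo unfolding strictly_increasing_def by blast
  qed
  ultimately show ?thesis by simp
qed

lemma rat_transfer:
  fixes p :: "nat \<Rightarrow> real^'g"
  assumes pos: "\<forall>j<J. \<forall>g. 0 < p j $ g" and 
    rat: "rationalizable p J d" and eb: "\<forall>j<J. e j \<in> budget p j"
    and sg: "\<forall>j<J. \<forall>i<J. sgn (p i \<bullet> e j - 1) = sgn (p i \<bullet> d j - 1)"
  shows "rationalizable p J e"
proof -
  obtain u where u: "strictly_increasing u" and opt: "\<forall>j<J. \<forall>y \<in> budget p j. u y \<le> u (d j)"
    and db: "\<forall>j<J. d j \<in> budget p j"
    using rat unfolding rationalizable_def by blast
  define w where "w j = u (d j)" for j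
  have lt: "w j < w i" if "i < J" "j < J" "p i \<bullet> e j < 1" for i j
  proof -
    have "sgn (p i \<bullet> e j - 1) = -1" using that(3) by simp
    hence "sgn (p i \<bullet> d j - 1) = -1" using sg that(1,2) by metis
    hence "p i \<bullet> d j < 1" by (metis diff_less_0_iff_less sgn_1_neg sgn_neg sgn_pos zero_less_diff not_less_iff_gr_or_eq sgn_0_0 eq_iff_diff_eq_0 neg_equal_zero one_neq_neg_one)
    thus ?thesis using rat_strict[OF pos u opt db that(1,2)] by (simp add: w_def)
  qed
  have le: "w j \<le> w i" if "i < J" "j < J" "p i \<bullet> e j \<le> 1" for i j
  proof (cases "p i \<bullet> e j < 1")
    case True thus ?thesis using lt that by force
  next
    case False
    hence "p i \<bullet> e j = 1" using that by simp
    hence "sgn (p i \<bullet> d j - 1) = 0" using sg that by (metis diff_self sgn_zero)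
    hence "p i \<bullet> d j = 1" by (simp add: sgn_0_0)
    hence "d j \<in> budget p i" using db that by (auto simp: budget_def)
    thus ?thesis using opt that by (simp add: w_def)
  qed
  define D where "D = {w i - w j | i j. i < J \<and> j < J \<and> w j < w i}"
  have finD: "finite D"
  proof -
    have "D \<subseteq> (\<lambda>(i,j). w i - w j) ` ({..<J} \<times> {..<J})" by (auto simp: D_def)
    thus ?thesis by (rule finite_subset) auto
  qed
  define \<epsilon> where "\<epsilon> = Min (insert 1 D)"
  have eps: "0 < \<epsilon>" using finD by (auto simp: \<epsilon>_def D_def)
  have epsle: "\<epsilon> \<le> w i - w j" if "i < J" "j < J" "w j < w i" for i j
  proof -
    have "w i - w j \<in> D" using that by (auto simp: D_def)
    thus ?thesis using finD by (simp add: \<epsilon>_def)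
  qed
  define M where "M = Max (w ` {..<J}) + 1"
  have wM: "w i < M" if "i < J" for i
    using that by (simp add: M_def) (meson Max_ge finite_imageI finite_lessThan image_eqI 
        lessThan_iff less_add_one order_le_less_trans)
  define S where "S y = {i. i < J \<and> p i \<bullet> y \<le> 1}" for y
  define f where "f i y = w i + \<epsilon> * (p i \<bullet> y - 1)" for i y
  define v where "v y = (if S y = {} then M + (\<Sum>g\<in>UNIV. y $ g) else Min ((\<lambda>i. f i y) ` S y))" for y
  have finS: "finite (S y)" for y by (auto simp: S_def)
  have vle: "v y \<le> f i y" if "i \<in> S y" for i y
    using that finS by (auto simp: v_def)
  have vex: "\<exists>i\<in>S y. v y = f i y" if "S y \<noteq> {}" for y
  proof -
    have "Min ((\<lambda>i. f i y) ` S y) \<in> (\<lambda>i. f i y) ` S y" using that finS by (intro Min_in) auto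
    thus ?thesis using that by (auto simp: v_def)
  qed
  have fle: "f i y \<le> w i" if "i \<in> S y" for i y
    using that eps by (auto simp: f_def S_def mult_le_0_iff)
  have sinc: "strictly_increasing v"
    unfolding strictly_increasing_def
  proof (intro allI impI, elim conjE)
    fix x y :: "real^'g"
    assume xo: "x \<in> nonneg_orthant" and yo: "y \<in> nonneg_orthant" and xy: "\<forall>k. x $ k \<le> y $ k" and ne: "x \<noteq> y"
    have pl: "p i \<bullet> x < p i \<bullet> y" if "i < J" for i using inner_strict_mono pos that xy ne by blast
    have Ssub: "S y \<subseteq> S x" using pl by (force simp: S_def)
    show "v x < v y"
    proof (cases "S y = {}")
      case False
      then obtain i where i: "i \<in> S y" "v y = f i y" using vex by blast
      have "v x \<le> f i x" using Ssub i vle by blast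
      also have "f i x < f i y" using pl[of i] i eps by (auto simp: f_def S_def)
      finally show ?thesis using i by simp
    next
      case True
      note Sy = True
      show ?thesis
      proof (cases "S x = {}")
        case True
        thus ?thesis using Sy sum_strict_mono_vec[OF xy ne] by (simp add: v_def)
      next
        case False
        then obtain i where i: "i \<in> S x" by blast
        have "v x \<le> w i" using vle[OF i] fle[OF i] by simp
        also have "\<dots> < M" using wM i by (simp add: S_def)
        also have "M \<le> v y" using Sy yo by (auto simp: v_def nonneg_orthant_def intro!: sum_nonneg)
        finally show ?thesis .
      qed
    qed
  qed
  have opt': "v y \<le> v (e j)" if j: "j < J" and y: "y \<in> budget p j" for j y
  proof -
    have "j \<in> S y" using y j by (simp add: S_def budget_def)
    hence "v y \<le> w j" using vle fle by (metis order_trans)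
    also have "w j \<le> v (e j)"
    proof -
      have "j \<in> S (e j)" using eb j by (simp add: S_def budget_def)
      then obtain i where i: "i \<in> S (e j)" "v (e j) = f i (e j)" using vex by blast
      have eo: "e j \<in> nonneg_orthant" using eb j by (simp add: budget_def)
      have iJ: "i < J" using i by (simp add: S_def)
      have "w j \<le> f i (e j)"
      proof (cases "p i \<bullet> e j < 1")
        case True
        have wl: "w j < w i" using lt iJ j True by blast
        have "\<epsilon> \<le> w i - w j" using epsle iJ j wl by blast
        moreover have "0 \<le> p i \<bullet> e j" using inner_nonneg_orth pos iJ eo by blast
        moreover have "\<epsilon> * (p i \<bullet> e j - 1) \<ge> - \<epsilon>" proof -
          have "0 \<le> \<epsilon> * (p i \<bullet> e j)" using eps calculation(2) by simp
          thus ?thesis by (simp add: right_diff_distrib)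
        qed
        ultimately show ?thesis by (simp add: f_def)
      next
        case False
        hence "p i \<bullet> e j = 1" using i by (simp add: S_def)
        thus ?thesis using le iJ j by (simp add: f_def)
      qed
      thus ?thesis using i by simp
    qed
    finally show ?thesis .
  qed
  show ?thesis unfolding rationalizable_def using eb sinc opt' by blast
qed


definition cellof :: "(nat \<Rightarrow> real^'g) \<Rightarrow> nat \<Rightarrow> real^'g \<Rightarrow> (real^'g) set" where
  "cellof p J y = {x \<in> budget_union p J. position p J x = position p J y}"

lemma cells_eq: "cells p J = cellof p J ` budget_union p J"
  by (auto simp: cells_def cellof_def)

lemma mem_cellof: "x \<in> cellof p J y \<longleftrightarrow> x \<in> budget_union p J \<and> (\<forall>i<J. sgn (p i \<bullet> x - 1) = sgn (p i \<bullet> y - 1))"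
  unfolding cellof_def position_def by (auto simp: fun_eq_iff)

lemma cell_unique: "C \<in> cells p J \<Longrightarrow> y \<in> C \<Longrightarrow> C = cellof p J y"
  by (auto simp: cells_eq cellof_def)

lemma self_cellof: "y \<in> budget_union p J \<Longrightarrow> y \<in> cellof p J y"
  by (simp add: cellof_def)

lemma budget_sub_BU: "j < J \<Longrightarrow> budget p j \<subseteq> budget_union p J"
  by (auto simp: budget_union_def)

lemma cellof_budget:
  assumes "j < J" "y \<in> budget p j" shows "cellof p J y \<subseteq> budget p j"
proof
  fix x assume x: "x \<in> cellof p J y"
  hence "x \<in> nonneg_orthant" by (auto simp: mem_cellof budget_union_def budget_def)
  moreover have "sgn (p j \<bullet> x - 1) = sgn (p j \<bullet> y - 1)" using x assms by (simp add: mem_cellof)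
  hence "p j \<bullet> x = 1" using assms(2) by (simp add: budget_def sgn_0_0)
  ultimately show "x \<in> budget p j" by (simp add: budget_def)
qed

lemma finite_cells: "finite (cells p J)"
proof -
  define h where "h y = map (\<lambda>i. sgn (p i \<bullet> y - 1)) [0..<J]" for y
  define g where "g ls = {x \<in> budget_union p J. h x = ls}" for ls
  have "cellof p J y = g (h y)" for y
    by (auto simp: g_def h_def mem_cellof)
  hence "cells p J \<subseteq> g ` {ls. set ls \<subseteq> {-1,0,1} \<and> length ls = J}"
    unfolding cells_eq by (auto simp: h_def sgn_if)
  moreover have "finite {ls. set ls \<subseteq> {-1,0,1::real} \<and> length ls = J}"
    by (rule finite_lists_length_eq) auto
  ultimately show ?thesis by (meson finite_imageI finite_subset)
qed

lemma finite_columns: "finite (columns p J rep)"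
proof -
  define S where "S = {c. (\<forall>j<J. c j \<in> cells p J) \<and> (\<forall>j. J \<le> j \<longrightarrow> c j = {})}"
  have sub: "columns p J rep \<subseteq> S" by (auto simp: S_def columns_def patches_def)
  have inj: "inj_on (\<lambda>c. map c [0..<J]) S"
  proof
    fix c c' assume "c \<in> S" "c' \<in> S" "map c [0..<J] = map c' [0..<J]"
    thus "c = c'" by (auto simp: S_def fun_eq_iff)
  qed
  have "(\<lambda>c. map c [0..<J]) ` S \<subseteq> {ls. set ls \<subseteq> cells p J \<and> length ls = J}"
    by (auto simp: S_def)
  moreover have "finite {ls. set ls \<subseteq> cells p J \<and> length ls = J}"
    by (rule finite_lists_length_eq) (rule finite_cells)
  ultimately have "finite S" using inj finite_imageD finite_subset by blast
  thus ?thesis using sub finite_subset by blast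
qed

lemma budget_borel: "budget p j \<in> sets borel"
proof -
  have "budget p j = {y \<in> space borel. (\<forall>k. 0 \<le> y $ k) \<and> p j \<bullet> y = 1}"
    by (auto simp: budget_def nonneg_orthant_def)
  also have "\<dots> \<in> sets borel" by measurable
  finally show ?thesis .
qed

lemma BU_borel: "budget_union p J \<in> sets borel"
  unfolding budget_union_def using budget_borel by auto

lemma cellof_borel: "cellof p J y \<in> sets borel"
proof -
  have "cellof p J y = budget_union p J \<inter> {x \<in> space borel. \<forall>i<J. sgn (p i \<bullet> x - 1) = sgn (p i \<bullet> y - 1)}"
    by (auto simp: mem_cellof)
  also have "\<dots> \<in> sets borel"
  proof (rule sets.Int[OF BU_borel])
    show "{x \<in> space borel. \<forall>i<J. sgn (p i \<bullet> x - 1) = sgn (p i \<bullet> y - 1)} \<in> sets borel"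
      by measurable
  qed
  finally show ?thesis .
qed

lemma cells_borel: "C \<in> cells p J \<Longrightarrow> C \<in> sets borel"
  by (auto simp: cells_eq cellof_borel)


lemma coord_bound:
  fixes a y :: "real^'g"
  assumes "\<forall>g. 0 < a $ g" "y \<in> nonneg_orthant" "a \<bullet> y = 1"
  shows "y $ k \<le> 1 / a $ k"
proof -
  have "a $ k * y $ k \<le> (\<Sum>g\<in>UNIV. a $ g * y $ g)"
    by (rule member_le_sum) (use assms in \<open>auto simp: nonneg_orthant_def less_imp_le\<close>)
  also have "\<dots> = 1" using assms(3) by (simp add: inner_vec_def)
  finally show ?thesis using assms(1) by (simp add: field_simps mult.commute)
qed

theorem corollary3:
  fixes p :: "nat \<Rightarrow> real^'g" and J :: nat and P :: "nat \<Rightarrow> (real^'g) measure"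
    and rep :: "(real^'g) set \<Rightarrow> real^'g" and k :: 'g and z :: real
  assumes "0 < J"
    and "\<forall>j<J. \<forall>g. 0 < p j $ g"
    and "\<forall>j<J. \<forall>x \<in> patches p J j. rep x \<in> x"
    and "stoch_rationalizable p J P"
    and "\<forall>C \<in> cells p J. \<forall>j<J. on_several_planes p J C \<and> C \<subseteq> budget p j \<longrightarrow> measure (P j) C = 0"
    and "0 \<le> z"
  shows "(INF \<nu> \<in> feasible p J P rep.
            ereal (\<Sum>x \<in> {x \<in> patches p J (J - 1). Sup ((\<lambda>y. y $ k) ` x) \<le> z}.
                     A_times (columns p J rep) \<nu> (J - 1) x))
           \<le> ereal (measure (P (J - 1)) {y \<in> budget p (J - 1). y $ k \<le> z})
       \<and> ereal (measure (P (J - 1)) {y \<in> budget p (J - 1). y $ k \<le> z})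
           \<le> (SUP \<nu> \<in> feasible p J P rep.
            ereal (\<Sum>x \<in> {x \<in> patches p J (J - 1). Inf ((\<lambda>y. y $ k) ` x) \<le> z}.
                     A_times (columns p J rep) \<nu> (J - 1) x))"
proof -
  note J0 = assms(1) and pos = assms(2) and repx = assms(3) and multi0 = assms(5)
  have sds: "\<forall>j<J. prob_space (P j) \<and> sets (P j) = sets (restrict_space borel (budget p j))"
    using assms(4) by (simp add: stoch_rationalizable_def stoch_demand_system_def)
  obtain Q where Q: "prob_space Q" and sQ: "sets Q = sets (PiM {..<J} P)"
    and AErat: "AE d in Q. rationalizable p J d"
    and distr: "\<forall>j<J. distr Q (P j) (\<lambda>d. d j) = P j"
    using assms(4) unfolding stoch_rationalizable_def by blast
  interpret Q: prob_space Q by (rule Q)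
  have Pprob: "prob_space (P j)" if "j < J" for j using sds that by blast
  have setsP: "A \<in> sets (P j) \<longleftrightarrow> A \<subseteq> budget p j \<and> A \<in> sets borel" if "j < J" for j A
  proof -
    have "budget p j \<inter> space borel \<in> sets borel" using budget_borel by simp
    thus ?thesis using sds that sets_restrict_space_iff by blast
  qed
  have spaceP: "space (P j) = budget p j" if "j < J" for j
  proof -
    have "space (P j) = space (restrict_space borel (budget p j))"
      using sds that sets_eq_imp_space_eq by blast
    thus ?thesis by (simp add: space_restrict_space)
  qed
  have measQ: "(\<lambda>d. d j) \<in> measurable Q (P j)" if "j < J" for j
  proof -
    have "(\<lambda>d. d j) \<in> measurable (PiM {..<J} P) (P j)"
      by (rule measurable_component_singleton) (use that in simp)
    thus ?thesis by (subst measurable_cong_sets[OF sQ refl])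
  qed
  have measeq: "measure (P j) A = measure Q ((\<lambda>d. d j) -` A \<inter> space Q)" if "j < J" "A \<in> sets (P j)" for j A
  proof -
    have "measure (P j) A = measure (distr Q (P j) (\<lambda>d. d j)) A" using distr that by simp
    thus ?thesis using measure_distr[OF measQ[OF that(1)] that(2)] by simp
  qed
  have cells_sets: "C \<in> sets (P j)" if "j < J" "C \<in> cells p J" "C \<subseteq> budget p j" for j C
    using setsP that cells_borel by blast
  have patch_cell: "x \<in> cells p J" "x \<subseteq> budget p j" if "x \<in> patches p J j" for x j
    using that by (auto simp: patches_def)
  define MP where "MP i = \<Union>{C \<in> cells p J. on_several_planes p J C \<and> C \<subseteq> budget p i}" for i
  have MPsets: "MP i \<in> sets (P i)" if "i < J" for i
  proof -
    have "MP i \<subseteq> budget p i" by (auto simp: MP_def)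
    moreover have "MP i \<in> sets borel" unfolding MP_def
      by (rule sets.finite_Union) (use finite_cells[of p J] cells_borel in auto)
    ultimately show ?thesis using setsP that by blast
  qed
  have MP0: "measure (P i) (MP i) = 0" if "i < J" for i
  proof -
    interpret Pi: prob_space "P i" using Pprob that .
    let ?S = "{C \<in> cells p J. on_several_planes p J C \<and> C \<subseteq> budget p i}"
    have "measure (P i) (MP i) = measure (P i) (\<Union>C\<in>?S. C)" by (simp add: MP_def)
    also have "\<dots> \<le> (\<Sum>C\<in>?S. measure (P i) C)"
      by (rule Pi.finite_measure_subadditive_finite) (use finite_cells[of p J] cells_sets that in auto)
    also have "\<dots> = 0" using multi0 that by (intro sum.neutral) auto
    finally show ?thesis using measure_nonneg[of "P i" "MP i"] by linarith
  qed
  have AEgood: "AE d in Q. \<forall>i\<in>{..<J}. cellof p J (d i) \<in> patches p J i"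
  proof (rule AE_finite_allI)
    fix i assume "i \<in> {..<J}" hence i: "i < J" by simp
    define N where "N = (\<lambda>d. d i) -` MP i \<inter> space Q"
    have Nsets: "N \<in> sets Q" unfolding N_def using measQ[OF i] MPsets[OF i] by (rule measurable_sets)
    have "measure Q N = 0" using measeq[OF i MPsets[OF i]] MP0[OF i] by (simp add: N_def)
    hence "N \<in> null_sets Q" using Nsets by (simp add: Q.emeasure_eq_measure null_sets_def)
    hence "AE d in Q. d \<notin> N" by (rule AE_not_in)
    thus "AE d in Q. cellof p J (d i) \<in> patches p J i"
    proof (rule AE_mp[OF _ AE_I2], intro impI)
      fix d assume d: "d \<in> space Q" and dN: "d \<notin> N"
      have di: "d i \<in> budget p i" using measurable_space[OF measQ[OF i] d] spaceP[OF i] by simp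
      have BU: "d i \<in> budget_union p J" using budget_sub_BU[OF i] di by blast
      have cc: "cellof p J (d i) \<in> cells p J" using BU by (simp add: cells_eq)
      have cb: "cellof p J (d i) \<subseteq> budget p i" using cellof_budget[OF i di] .
      show "cellof p J (d i) \<in> patches p J i"
      proof (rule ccontr)
        assume "cellof p J (d i) \<notin> patches p J i"
        hence "on_several_planes p J (cellof p J (d i))" using cc cb by (simp add: patches_def)
        hence "d i \<in> MP i" using cc cb self_cellof[OF BU] by (auto simp: MP_def)
        thus False using dN d by (simp add: N_def)
      qed
    qed
  qed simp
  define Col where "Col = columns p J rep"
  have finCol: "finite Col" by (simp add: Col_def finite_columns)
  define E where "E c = (\<Inter>j\<in>{..<J}. (\<lambda>d. d j) -` c j \<inter> space Q)" for c
  have Esets: "E c \<in> sets Q" if "c \<in> Col" for c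
    unfolding E_def
  proof (rule sets.finite_INT)
    fix j assume "j \<in> {..<J}" hence j: "j < J" by simp
    have "c j \<in> patches p J j" using that j by (simp add: Col_def columns_def)
    hence "c j \<in> sets (P j)" using cells_sets[OF j] patch_cell by blast
    thus "(\<lambda>d. d j) -` c j \<inter> space Q \<in> sets Q" by (rule measurable_sets[OF measQ[OF j]])
  qed (use J0 in auto)
  have memE: "d \<in> E c \<longleftrightarrow> d \<in> space Q \<and> (\<forall>j<J. d j \<in> c j)" for d c
    using J0 by (auto simp: E_def)
  define \<nu> where "\<nu> c = (if c \<in> Col then measure Q (E c) else 0)" for c
  have disj: "disjoint_family_on E Col"
    unfolding disjoint_family_on_def
  proof (intro ballI impI)
    fix c c' assume c: "c \<in> Col" and c': "c' \<in> Col" and ne: "c \<noteq> c'"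
    show "E c \<inter> E c' = {}"
    proof (rule ccontr)
      assume "E c \<inter> E c' \<noteq> {}"
      then obtain d where d: "d \<in> E c" "d \<in> E c'" by blast
      have "c i = c' i" for i
      proof (cases "i < J")
        case True
        have "c i \<in> cells p J" "c' i \<in> cells p J"
          using c c' True by (auto simp: Col_def columns_def patches_def)
        moreover have "d i \<in> c i" "d i \<in> c' i" using d True memE by auto
        ultimately show ?thesis using cell_unique by metis
      next
        case False thus ?thesis using c c' by (simp add: Col_def columns_def)
      qed
      thus False using ne by auto
    qed
  qed
  have key: "A_times Col \<nu> j x = measure (P j) x" if j: "j < J" and x: "x \<in> patches p J j" for j x
  proof -
    let ?S = "{c \<in> Col. c j = x}"
    have xs: "x \<in> sets (P j)" using cells_sets[OF j] patch_cell[OF x] by blast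
    have "A_times Col \<nu> j x = (\<Sum>c\<in>?S. measure Q (E c))"
      by (simp add: A_times_def \<nu>_def)
    also have "\<dots> = measure Q (\<Union>c\<in>?S. E c)"
      by (rule Q.finite_measure_finite_Union[symmetric])
         (use finCol Esets disj in \<open>auto intro: disjoint_family_on_mono\<close>)
    also have "\<dots> = measure Q ((\<lambda>d. d j) -` x \<inter> space Q)"
    proof (rule measure_eq_AE)
      show "(\<Union>c\<in>?S. E c) \<in> sets Q" using finCol Esets by (intro sets.finite_UN) auto
      show "(\<lambda>d. d j) -` x \<inter> space Q \<in> sets Q" using measQ[OF j] xs by (rule measurable_sets)
      show "AE d in Q. (d \<in> (\<Union>c\<in>?S. E c)) = (d \<in> (\<lambda>d. d j) -` x \<inter> space Q)"
        using AErat AEgood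
      proof (eventually_elim)
        case (elim d)
        show ?case
        proof
          assume "d \<in> (\<Union>c\<in>?S. E c)"
          thus "d \<in> (\<lambda>d. d j) -` x \<inter> space Q" using memE j by auto
        next
          assume dx: "d \<in> (\<lambda>d. d j) -` x \<inter> space Q"
          hence dQ: "d \<in> space Q" by simp
          have dib: "d i \<in> budget p i" if "i < J" for i
            using measurable_space[OF measQ[OF that] dQ] spaceP[OF that] by simp
          define c where "c i = (if i < J then cellof p J (d i) else {})" for i
          have cpat: "c i \<in> patches p J i" if "i < J" for i using elim that by (simp add: c_def)
          have cb: "rep (c i) \<in> budget p i" if "i < J" for i
            using repx cpat[OF that] patch_cell[OF cpat[OF that]] that by blast
          have csg: "sgn (p l \<bullet> rep (c i) - 1) = sgn (p l \<bullet> d i - 1)" if "i < J" "l < J" for i l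
          proof -
            have "rep (c i) \<in> cellof p J (d i)" using repx cpat[OF that(1)] that(1) by (simp add: c_def)
            thus ?thesis using that(2) by (simp add: mem_cellof)
          qed
          have "rationalizable p J (\<lambda>i. rep (c i))"
            by (rule rat_transfer[OF pos elim(1)]) (use cb csg in auto)
          hence cCol: "c \<in> Col" using cpat by (simp add: Col_def columns_def c_def)
          have "x = cellof p J (d j)" using cell_unique[OF patch_cell(1)[OF x]] dx by simp
          hence cj: "c j = x" using j by (simp add: c_def)
          have "d \<in> E c"
          proof -
            have "d i \<in> c i" if "i < J" for i
              using self_cellof[of "d i" p J] budget_sub_BU[OF that, of p] dib[OF that] that by (auto simp: c_def)
            thus ?thesis using memE dQ by blast
          qed
          thus "d \<in> (\<Union>c\<in>?S. E c)" using cCol cj by blast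
        qed
      qed
    qed
    also have "\<dots> = measure (P j) x" using measeq[OF j xs] by simp
    finally show ?thesis .
  qed
  have feas: "\<nu> \<in> feasible p J P rep"
    unfolding feasible_def using key by (auto simp: \<nu>_def Col_def)
  define L where "L = J - 1"
  have L: "L < J" using J0 by (simp add: L_def)
  interpret PL: prob_space "P L" using Pprob[OF L] .
  define B where "B = {y \<in> budget p L. y $ k \<le> z}"
  have Bsets: "B \<in> sets (P L)"
  proof -
    have "B = budget p L \<inter> {y \<in> space borel. y $ k \<le> z}" by (auto simp: B_def)
    also have "\<dots> \<in> sets borel"
    proof (rule sets.Int[OF budget_borel])
      show "{y \<in> space borel. y $ k \<le> z} \<in> sets borel" by measurable
    qed
    finally show ?thesis using setsP[OF L] by (auto simp: B_def)
  qed
  have pdisj: "disjoint_family_on (\<lambda>x. x) (patches p J L)"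
    unfolding disjoint_family_on_def
  proof (intro ballI impI)
    fix x x' assume x: "x \<in> patches p J L" and x': "x' \<in> patches p J L" and ne: "x \<noteq> x'"
    show "x \<inter> x' = {}"
      using cell_unique[OF patch_cell(1)[OF x]] cell_unique[OF patch_cell(1)[OF x']] ne by blast
  qed
  have finPat: "finite (patches p J L)"
    using finite_cells by (rule finite_subset[rotated]) (auto simp: patches_def)
  have psets: "x \<in> sets (P L)" if "x \<in> patches p J L" for x
    using cells_sets[OF L] patch_cell[OF that] by blast
  let ?SL = "{x \<in> patches p J L. Sup ((\<lambda>y. y $ k) ` x) \<le> z}"
  let ?SU = "{x \<in> patches p J L. Inf ((\<lambda>y. y $ k) ` x) \<le> z}"
  have low: "(\<Sum>x\<in>?SL. A_times Col \<nu> L x) \<le> measure (P L) B"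
  proof -
    have "(\<Sum>x\<in>?SL. A_times Col \<nu> L x) = (\<Sum>x\<in>?SL. measure (P L) x)"
      using key[OF L] by simp
    also have "\<dots> = measure (P L) (\<Union>x\<in>?SL. x)"
      by (rule PL.finite_measure_finite_Union[symmetric])
         (use finPat psets pdisj in \<open>auto intro: disjoint_family_on_mono\<close>)
    also have "\<dots> \<le> measure (P L) B"
    proof (rule PL.finite_measure_mono[OF _ Bsets])
      show "(\<Union>x\<in>?SL. x) \<subseteq> B"
      proof
        fix y assume "y \<in> (\<Union>x\<in>?SL. x)"
        then obtain x where x: "x \<in> ?SL" "y \<in> x" by blast
        have xb: "x \<subseteq> budget p L" using patch_cell x by blast
        have "bdd_above ((\<lambda>y. y $ k) ` x)"
        proof (rule bdd_aboveI2)
          fix y' assume "y' \<in> x"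
          hence "y' \<in> budget p L" using xb by blast
          thus "y' $ k \<le> 1 / p L $ k" using coord_bound[of "p L" y' k] pos L by (auto simp: budget_def)
        qed
        hence "y $ k \<le> Sup ((\<lambda>y. y $ k) ` x)" using x by (intro cSup_upper) auto
        thus "y \<in> B" using x xb by (auto simp: B_def)
      qed
    qed
    finally show ?thesis .
  qed
  have up: "measure (P L) B \<le> (\<Sum>x\<in>?SU. A_times Col \<nu> L x)"
  proof -
    have Bsub: "B \<subseteq> (\<Union>x\<in>?SU. x) \<union> MP L"
    proof
      fix y assume y: "y \<in> B"
      hence yb: "y \<in> budget p L" by (simp add: B_def)
      have BU: "y \<in> budget_union p J" using budget_sub_BU[OF L] yb by blast
      have cc: "cellof p J y \<in> cells p J" using BU by (simp add: cells_eq)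
      have cb: "cellof p J y \<subseteq> budget p L" using cellof_budget[OF L yb] .
      have yc: "y \<in> cellof p J y" using self_cellof[OF BU] .
      show "y \<in> (\<Union>x\<in>?SU. x) \<union> MP L"
      proof (cases "on_several_planes p J (cellof p J y)")
        case True thus ?thesis using cc cb yc by (auto simp: MP_def)
      next
        case False
        hence cp: "cellof p J y \<in> patches p J L" using cc cb by (simp add: patches_def)
        have "bdd_below ((\<lambda>y. y $ k) ` cellof p J y)"
        proof (rule bdd_belowI2)
          fix y' assume "y' \<in> cellof p J y"
          hence "y' \<in> budget p L" using cb by blast
          thus "0 \<le> y' $ k" by (auto simp: budget_def nonneg_orthant_def)
        qed
        hence "Inf ((\<lambda>y. y $ k) ` cellof p J y) \<le> y $ k" using yc by (intro cInf_lower) auto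
        also have "\<dots> \<le> z" using y by (simp add: B_def)
        finally show ?thesis using cp yc by blast
      qed
    qed
    have Usets: "(\<Union>x\<in>?SU. x) \<in> sets (P L)" using finPat psets by (intro sets.finite_UN) auto
    have "measure (P L) B \<le> measure (P L) ((\<Union>x\<in>?SU. x) \<union> MP L)"
      by (rule PL.finite_measure_mono[OF Bsub]) (use Usets MPsets[OF L] in auto)
    also have "\<dots> \<le> measure (P L) (\<Union>x\<in>?SU. x) + measure (P L) (MP L)"
      by (rule measure_Un_le) (use Usets MPsets[OF L] in auto)
    also have "\<dots> = measure (P L) (\<Union>x\<in>?SU. x)" using MP0[OF L] by simp
    also have "\<dots> \<le> (\<Sum>x\<in>?SU. measure (P L) x)"
      by (rule PL.finite_measure_subadditive_finite) (use finPat psets in auto)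
    also have "\<dots> = (\<Sum>x\<in>?SU. A_times Col \<nu> L x)" using key[OF L] by simp
    finally show ?thesis .
  qed
  have "(INF \<nu> \<in> feasible p J P rep. ereal (\<Sum>x\<in>?SL. A_times Col \<nu> L x)) \<le> ereal (\<Sum>x\<in>?SL. A_times Col \<nu> L x)"
    using feas by (rule INF_lower)
  also have "\<dots> \<le> ereal (measure (P L) B)" using low by simp
  finally have 1: "(INF \<nu> \<in> feasible p J P rep. ereal (\<Sum>x\<in>?SL. A_times Col \<nu> L x)) \<le> ereal (measure (P L) B)" .
  have "ereal (measure (P L) B) \<le> ereal (\<Sum>x\<in>?SU. A_times Col \<nu> L x)" using up by simp
  also have "\<dots> \<le> (SUP \<nu> \<in> feasible p J P rep. ereal (\<Sum>x\<in>?SU. A_times Col \<nu> L x))"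
    using feas by (rule SUP_upper)
  finally have 2: "ereal (measure (P L) B) \<le> (SUP \<nu> \<in> feasible p J P rep. ereal (\<Sum>x\<in>?SU. A_times Col \<nu> L x))" .
  show ?thesis using 1 2 by (simp add: L_def B_def Col_def)
qed

end
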